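(* Let $N^h\ge 2$ be an integer, $h=1/N^h$, and let $\eta_K,\eta_M$ be real parameters. Let $\mathbf{K}_s=\mathbf{K}-\eta_K\mathbf{S}$ and $\mathbf{M}_{gs}=\mathbf{M}+\eta_M\mathbf{S}_g$ be the $(N^h-1)\times(N^h-1)$ matrices described in the context. Then the generalized matrix eigenvalue problem $\mathbf{K}_{s}\mathbf{U}_{gs}=\lambda^h_{gs}\mathbf{M}_{gs}\mathbf{U}_{gs}$ has, for every $j\in\{1,\dots,N^h-1\}$, the eigenpair $(\lambda^h_{gs,j},\mathbf{U}_{gs,j})$ given by \[ \lambda_{gs,j}^h=\frac{12}{h^2}\,\frac{\big(1-2\eta_K+2\eta_K\cos(t_j)\big)\sin^2(t_j/2)}{2+18\eta_M+(1-24\eta_M)\cos(t_j)+6\eta_M\cos(2t_j)},\qquad \mathbf{U}_{gs,j,k}=c_j\sin(k t_j),\quad k=1,\dots,N^h-1, \] where $t_j:=j\pi h$, $\mathbf{U}_{gs,j,k}$ denotes the $k$-th component of $\mathbf{U}_{gs,j}$, and $c_j>0$ is a normalization constant.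
   Context: Setting (linear finite elements, generalized SoftFEM, in 1D): Let $x_k=kh$, $k=0,\dots,N^h$, be a uniform mesh of $[0,1]$. Let $V^h$ be the space of continuous functions on $[0,1]$ that are affine on each $[x_{k-1},x_k]$ and vanish at $0$ and $1$, with hat basis $\phi_k$, $k=1,\dots,N^h-1$, $\phi_k(x_l)=\delta_{kl}$. For $v\in V^h$ and an interior node $x_k$ let $[\![v']\!](x_k)=v'(x_k^-)-v'(x_k^+)$ be the jump of the derivative. Define $a(v,w)=\int_0^1 v'w'\,dx$, $b(v,w)=\int_0^1 vw\,dx$, $s(v,w)=\sum_{k=1}^{N^h-1} h\,[\![v']\!](x_k)[\![w']\!](x_k)$, $s_g(v,w)=\sum_{k=1}^{N^h-1} h^3\,[\![v']\!](x_k)[\![w']\!](x_k)$, and the matrices $\mathbf{K}_{kl}=a(\phi_l,\phi_k)$, $\mathbf{M}_{kl}=b(\phi_l,\phi_k)$, $\mathbf{S}_{kl}=s(\phi_l,\phi_k)$, $(\mathbf{S}_g)_{kl}=s_g(\phi_l,\phi_k)$, $k,l=1,\dots,N^h-1$. Explicitly, $\mathbf{K}=\frac1h\,\mathrm{tridiag}(-1,2,-1)$, $\mathbf{M}=h\,\mathrm{tridiag}(\tfrac16,\tfrac23,\tfrac16)$, $\mathbf{S}=\frac1h$ times the symmetric pentadiagonal matrix with rows $(1,-4,6,-4,1)$ except that the first and last diagonal entries are $5$ (rows truncated at the boundary), and $\mathbf{S}_g=h^2\mathbf{S}$. *)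

theory Defs
  imports Complex_Main
begin

(* Uniform mesh x_k = k h on [0,1], h = 1/N (N = N^h). Matrices are indexed by
   k,l in {1..N-1} and represented as functions nat => nat => real. *)

definition meshsize :: "nat \<Rightarrow> real" where
  "meshsize N = 1 / real N"

definition Kmat :: "nat \<Rightarrow> nat \<Rightarrow> nat \<Rightarrow> real" where
  "Kmat N k l = (if k = l then 2 else if k = l + 1 \<or> l = k + 1 then -1 else 0) / meshsize N"

definition Mmat :: "nat \<Rightarrow> nat \<Rightarrow> nat \<Rightarrow> real" where
  "Mmat N k l = meshsize N * (if k = l then 2/3 else if k = l + 1 \<or> l = k + 1 then 1/6 else 0)"

(* jump of the derivative of the hat function phi_l at node x_i:
   [[phi_l']](x_i) = phi_l'(x_i^-) - phi_l'(x_i^+) *)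
definition hat_jump :: "nat \<Rightarrow> nat \<Rightarrow> nat \<Rightarrow> real" where
  "hat_jump N l i = (if i = l then 2 else if i = l + 1 \<or> l = i + 1 then -1 else 0) / meshsize N"

definition Smat :: "nat \<Rightarrow> nat \<Rightarrow> nat \<Rightarrow> real" where
  "Smat N k l = (\<Sum>i=1..N-1. meshsize N * hat_jump N l i * hat_jump N k i)"

definition Sgmat :: "nat \<Rightarrow> nat \<Rightarrow> nat \<Rightarrow> real" where
  "Sgmat N k l = (\<Sum>i=1..N-1. meshsize N ^ 3 * hat_jump N l i * hat_jump N k i)"

definition Ksmat :: "real \<Rightarrow> nat \<Rightarrow> nat \<Rightarrow> nat \<Rightarrow> real" where
  "Ksmat etaK N k l = Kmat N k l - etaK * Smat N k l"

definition Mgsmat :: "real \<Rightarrow> nat \<Rightarrow> nat \<Rightarrow> nat \<Rightarrow> real" where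
  "Mgsmat etaM N k l = Mmat N k l + etaM * Sgmat N k l"

definition gen_eigenpair ::
  "nat \<Rightarrow> (nat \<Rightarrow> nat \<Rightarrow> real) \<Rightarrow> (nat \<Rightarrow> nat \<Rightarrow> real) \<Rightarrow> real \<Rightarrow> (nat \<Rightarrow> real) \<Rightarrow> bool" where
  "gen_eigenpair N A B lam U \<longleftrightarrow>
     (\<exists>k\<in>{1..N-1}. U k \<noteq> 0) \<and>
     (\<forall>k\<in>{1..N-1}. (\<Sum>l=1..N-1. A k l * U l) = lam * (\<Sum>l=1..N-1. B k l * U l))"

end

theory Submission
  imports Defs
begin

lemma tri_sum:
  fixes f :: "nat \<Rightarrow> real"
  assumes k: "k \<in> {1..N-1}" and f0: "f 0 = 0" and fN: "f N = 0"
  shows "(\<Sum>l=1..N-1. (if k = l then a else if k = l+1 \<or> l = k+1 then b else 0) * f l)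
         = a*f k + b*f(k-1) + b*f(k+1)"
proof -
  have "(\<Sum>l=1..N-1. (if k = l then a else if k = l+1 \<or> l = k+1 then b else 0) * f l)
      = (\<Sum>l=1..N-1. (if l = k then a * f l else 0) + (if l = k-1 then b * f l else 0)
            + (if l = k+1 then b * f l else 0))"
    using k by (intro sum.cong) auto
  also have "\<dots> = a*f k + b*f(k-1) + b*f(k+1)"
    using k f0 fN
    by (cases "k = 1"; cases "Suc k = N") (auto simp add: sum.distrib sum.delta')
  finally show ?thesis .
qed

lemma tri_sum_sym:
  fixes f :: "nat \<Rightarrow> real"
  assumes k: "k \<in> {1..N-1}" and f0: "f 0 = 0" and fN: "f N = 0"
  shows "(\<Sum>l=1..N-1. (if l = k then a else if l = k+1 \<or> k = l+1 then b else 0) * f l)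
         = a*f k + b*f(k-1) + b*f(k+1)"
proof -
  have "(\<Sum>l=1..N-1. (if l = k then a else if l = k+1 \<or> k = l+1 then b else 0) * f l)
      = (\<Sum>l=1..N-1. (if k = l then a else if k = l+1 \<or> l = k+1 then b else 0) * f l)"
    by (intro sum.cong) auto
  then show ?thesis using tri_sum[OF assms] by simp
qed

lemma main_eig:
  fixes u :: "nat \<Rightarrow> real"
  assumes N: "N \<ge> 2" and u0: "u 0 = 0" and uN: "u N = 0"
    and eig: "\<And>i. i \<in> {1..N-1} \<Longrightarrow> u (i-1) + u (i+1) = 2 * C * u i"
    and k: "k \<in> {1..N-1}"
  shows "(\<Sum>l=1..N-1. Ksmat etaK N k l * u l)
            = ((2-2*C) / meshsize N - etaK * (2-2*C)^2 / meshsize N) * u k"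
    and "(\<Sum>l=1..N-1. Mgsmat etaM N k l * u l)
            = (meshsize N * (2 + C) / 3 + etaM * meshsize N * (2-2*C)^2) * u k"
proof -
  define h where "h = meshsize N"
  have h0: "h \<noteq> 0" using N by (simp add: h_def meshsize_def)
  define \<mu> where "\<mu> = 2 - 2*C"
  have T: "(\<Sum>l=1..N-1. (if i = l then a else if i = l+1 \<or> l = i+1 then b else 0) * u l)
       = a * u i + b * (2*C*u i)" if "i \<in> {1..N-1}" for i a b
  proof -
    have "a*u i + b*u(i-1) + b*u(i+1) = a*u i + b*(u(i-1)+u(i+1))" by (simp add: algebra_simps)
    then show ?thesis using tri_sum[OF that u0 uN, of a b] eig[OF that] by simp
  qed
  have HJ: "(\<Sum>l=1..N-1. hat_jump N l i * u l) = \<mu> / h * u i" if "i \<in> {1..N-1}" for i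
  proof -
    have "(\<Sum>l=1..N-1. hat_jump N l i * u l)
        = (\<Sum>l=1..N-1. (if i = l then 2 else if i = l+1 \<or> l = i+1 then -1 else 0) * u l) / h"
      unfolding hat_jump_def h_def by (simp add: sum_divide_distrib eq_commute[of l i for l])
    also have "\<dots> = \<mu> / h * u i" using T[OF that, of 2 "-1"] by (simp add: \<mu>_def algebra_simps)
    finally show ?thesis .
  qed
  define v where "v i = (if i \<in> {1..N-1} then u i else 0)" for i
  have S: "(\<Sum>l=1..N-1. Smat N k l * u l) = \<mu>^2 / h * u k"
  proof -
    have "(\<Sum>l=1..N-1. Smat N k l * u l)
        = (\<Sum>l=1..N-1. \<Sum>i=1..N-1. h * hat_jump N k i * (hat_jump N l i * u l))"
      unfolding Smat_def h_def by (intro sum.cong refl) (simp add: sum_distrib_left mult_ac)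
    also have "\<dots> = (\<Sum>i=1..N-1. h * hat_jump N k i * (\<Sum>l=1..N-1. hat_jump N l i * u l))"
      by (subst sum.swap) (simp add: sum_distrib_left)
    also have "\<dots> = (\<Sum>i=1..N-1. \<mu> * (hat_jump N k i * u i))"
    proof (rule sum.cong[OF refl])
      fix i assume "i \<in> {1..N-1}"
      then show "h * hat_jump N k i * (\<Sum>l=1..N-1. hat_jump N l i * u l) = \<mu> * (hat_jump N k i * u i)"
        using HJ[of i] h0 by simp
    qed
    also have "\<dots> = \<mu> * (\<Sum>i=1..N-1. (if i = k then 2 else if i = k+1 \<or> k = i+1 then -1 else 0) * u i) / h"
      unfolding hat_jump_def h_def by (simp add: sum_distrib_left sum_divide_distrib algebra_simps)
    also have "\<dots> = \<mu> * (2 * u k - (2*C*u k)) / h"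
    proof -
      have "(\<Sum>l=1..N-1. (if l = k then 2 else if l = k+1 \<or> k = l+1 then -1 else 0) * u l)
          = 2 * u k - (u (k-1) + u (k+1))"
        using tri_sum_sym[OF k u0 uN, of 2 "-1"] by simp
      then show ?thesis using eig[OF k] by simp
    qed
    also have "\<dots> = \<mu>^2 / h * u k" by (simp add: \<mu>_def power2_eq_square algebra_simps)
    finally show ?thesis .
  qed
  have Sg: "(\<Sum>l=1..N-1. Sgmat N k l * u l) = h^2 * (\<Sum>l=1..N-1. Smat N k l * u l)"
    unfolding Sgmat_def Smat_def h_def
    by (simp add: sum_distrib_left sum_distrib_right power3_eq_cube power2_eq_square algebra_simps)
  have K: "(\<Sum>l=1..N-1. Kmat N k l * u l) = \<mu> / h * u k"
  proof -
    have "(\<Sum>l=1..N-1. Kmat N k l * u l)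
        = (\<Sum>l=1..N-1. (if k = l then 2 else if k = l+1 \<or> l = k+1 then -1 else 0) * u l) / h"
      unfolding Kmat_def h_def by (simp add: sum_divide_distrib)
    then show ?thesis using T[OF k, of 2 "-1"] by (simp add: \<mu>_def algebra_simps)
  qed
  have M: "(\<Sum>l=1..N-1. Mmat N k l * u l) = h * (2 + C) / 3 * u k"
  proof -
    have "(\<Sum>l=1..N-1. Mmat N k l * u l)
        = h * (\<Sum>l=1..N-1. (if k = l then 2/3 else if k = l+1 \<or> l = k+1 then 1/6 else 0) * u l)"
      unfolding Mmat_def h_def by (simp add: sum_distrib_left algebra_simps)
    then show ?thesis using T[OF k, of "2/3" "1/6"] by (simp add: algebra_simps)
  qed
  show "(\<Sum>l=1..N-1. Ksmat etaK N k l * u l)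
            = ((2-2*C) / meshsize N - etaK * (2-2*C)^2 / meshsize N) * u k"
    unfolding Ksmat_def using K S
    by (simp add: left_diff_distrib sum_subtractf sum_distrib_left h_def \<mu>_def algebra_simps
        flip: sum_distrib_left)
  show "(\<Sum>l=1..N-1. Mgsmat etaM N k l * u l)
            = (meshsize N * (2 + C) / 3 + etaM * meshsize N * (2-2*C)^2) * u k"
  proof -
    have "(\<Sum>l=1..N-1. Mgsmat etaM N k l * u l) = (\<Sum>l=1..N-1. Mmat N k l * u l)
        + etaM * (\<Sum>l=1..N-1. Sgmat N k l * u l)"
      unfolding Mgsmat_def sum_distrib_left sum.distrib[symmetric] by (intro sum.cong refl) (simp add: algebra_simps)
    also have "\<dots> = h * (2 + C) / 3 * u k + etaM * (h^2 * (\<mu>^2 / h * u k))"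
      using M S Sg by simp
    also have "\<dots> = (meshsize N * (2 + C) / 3 + etaM * meshsize N * (2-2*C)^2) * u k"
      using h0 unfolding h_def[symmetric] \<mu>_def by (simp add: field_simps power2_eq_square)
    finally show ?thesis .
  qed
qed

theorem lemma1:
  fixes N :: nat and etaK etaM :: real
  assumes "N \<ge> 2"
  shows "\<forall>j\<in>{1..N-1}. \<forall>c::real. c > 0 \<longrightarrow>
    (let h = meshsize N; t = real j * pi * h;
         den = 2 + 18 * etaM + (1 - 24 * etaM) * cos t + 6 * etaM * cos (2 * t)
     in den \<noteq> 0 \<longrightarrow>
        gen_eigenpair N (Ksmat etaK N) (Mgsmat etaM N)
          (12 / h^2 * ((1 - 2 * etaK + 2 * etaK * cos t) * (sin (t / 2))^2) / den)
          (\<lambda>k. c * sin (real k * t)))"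
proof (intro ballI allI impI)
  fix j :: nat and c :: real
  assume j: "j \<in> {1..N-1}" and c: "c > 0"
  define h where "h = meshsize N"
  define t where "t = real j * pi * h"
  define den where "den = 2 + 18 * etaM + (1 - 24 * etaM) * cos t + 6 * etaM * cos (2 * t)"
  define u where "u k = c * sin (real k * t)" for k :: nat
  define C where "C = cos t"
  have Npos: "real N > 0" using assms by simp
  have h0: "h > 0" using Npos by (simp add: h_def meshsize_def)
  have u0: "u 0 = 0" by (simp add: u_def)
  have "real N * t = real j * pi" using Npos by (simp add: t_def h_def meshsize_def)
  then have uN: "u N = 0" by (simp add: u_def)
  have eig: "u (i-1) + u (i+1) = 2 * C * u i" if "i \<in> {1..N-1}" for i
  proof -
    have ri: "real (i-1) = real i - 1" using that by auto
    have "sin (real (i-1) * t) + sin (real (i+1) * t) = 2 * cos t * sin (real i * t)"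
      unfolding ri by (simp add: algebra_simps sin_add sin_diff)
    then show ?thesis by (simp add: u_def C_def algebra_simps flip: distrib_left)
  qed
  have tpos: "0 < t" and tpi: "t < pi"
  proof -
    have "real j < real N" using j assms by auto
    then have "real j / real N < 1" using Npos by simp
    moreover have "t = pi * (real j / real N)" by (simp add: t_def h_def meshsize_def)
    ultimately show "t < pi" using pi_gt_zero mult_strict_left_mono[of "real j / real N" 1 pi] by simp
    show "0 < t" using j Npos by (simp add: t_def h_def meshsize_def)
  qed
  have u1: "u 1 \<noteq> 0" using sin_gt_zero[OF tpos tpi] c by (simp add: u_def)
  show "let h = meshsize N; t = real j * pi * h;
         den = 2 + 18 * etaM + (1 - 24 * etaM) * cos t + 6 * etaM * cos (2 * t)
     in den \<noteq> 0 \<longrightarrow>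
        gen_eigenpair N (Ksmat etaK N) (Mgsmat etaM N)
          (12 / h^2 * ((1 - 2 * etaK + 2 * etaK * cos t) * (sin (t / 2))^2) / den)
          (\<lambda>k. c * sin (real k * t))"
    unfolding Let_def h_def[symmetric] t_def[symmetric] den_def[symmetric]
  proof
    assume den: "den \<noteq> 0"
    have s2: "(sin (t/2))^2 = (1 - C) / 2" using cos_double_sin[of "t/2"] by (simp add: C_def)
    have c2: "cos (2*t) = 2 * C^2 - 1" by (simp add: C_def cos_double_cos)
    have den': "den = 3 * ((2 + C) / 3 + etaM * (2-2*C)^2)"
      unfolding den_def c2 by (simp add: C_def power2_eq_square algebra_simps)
    have key: "(2-2*C) / h - etaK * (2-2*C)^2 / h
        = 12 / h^2 * ((1 - 2 * etaK + 2 * etaK * C) * (sin (t / 2))^2) / den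
          * (h * (2 + C) / 3 + etaM * h * (2-2*C)^2)"
    proof -
      have d2: "(2 + C) / 3 + etaM * (2-2*C)^2 \<noteq> 0" by (metis den den' mult_zero_right)
      have "h * (2 + C) / 3 + etaM * h * (2-2*C)^2 = h * ((2 + C) / 3 + etaM * (2-2*C)^2)"
        by (simp add: algebra_simps)
      moreover have "\<And>D. D \<noteq> 0 \<Longrightarrow> (2-2*C) / h - etaK * (2-2*C)^2 / h
          = 12 / h^2 * ((1 - 2 * etaK + 2 * etaK * C) * ((1 - C) / 2)) / (3 * D) * (h * D)"
        using h0 by (simp add: field_simps power2_eq_square)
      ultimately show ?thesis unfolding s2 den' using d2 by metis
    qed
    show "gen_eigenpair N (Ksmat etaK N) (Mgsmat etaM N)
          (12 / h^2 * ((1 - 2 * etaK + 2 * etaK * cos t) * (sin (t / 2))^2) / den)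
          (\<lambda>k. c * sin (real k * t))"
      unfolding gen_eigenpair_def
    proof (intro conjI ballI)
      show "\<exists>k\<in>{1..N-1}. c * sin (real k * t) \<noteq> 0"
        using u1 assms by (intro bexI[of _ 1]) (auto simp: u_def)
    next
      fix k assume k: "k \<in> {1..N-1}"
      have "(\<Sum>l=1..N-1. Ksmat etaK N k l * u l)
           = 12 / h^2 * ((1 - 2 * etaK + 2 * etaK * cos t) * (sin (t / 2))^2) / den
             * (\<Sum>l=1..N-1. Mgsmat etaM N k l * u l)"
      proof -
        have e1: "(\<Sum>l=1..N-1. Ksmat etaK N k l * u l) = ((2-2*C) / h - etaK * (2-2*C)^2 / h) * u k"
          unfolding h_def by (rule main_eig(1)[OF assms u0 uN eig k])
        have e2: "(\<Sum>l=1..N-1. Mgsmat etaM N k l * u l) = (h * (2 + C) / 3 + etaM * h * (2-2*C)^2) * u k"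
          unfolding h_def by (rule main_eig(2)[OF assms u0 uN eig k])
        show ?thesis unfolding e1 e2 key by (simp add: C_def)
      qed
      then show "(\<Sum>l=1..N-1. Ksmat etaK N k l * (c * sin (real l * t)))
           = 12 / h^2 * ((1 - 2 * etaK + 2 * etaK * cos t) * (sin (t / 2))^2) / den
             * (\<Sum>l=1..N-1. Mgsmat etaM N k l * (c * sin (real l * t)))"
        by (simp add: u_def)
    qed
  qed
qed

end
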